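(* Let $1<p<\infty$ and let $X$ be a Banach space isomorphic to $\ell_p$. Then for every nonempty bounded closed convex $C\subset X$, every $\mathfrak{cm}$-nonexpansive map $T\colon C\to C$ has a fixed point.
   Context: For a bounded convex set $C$, a nonexpansive map $T\colon C\to C$ is $\mathfrak{cm}$-nonexpansive if for all $n\in\mathbb{N}$, $y\in C$ and sequences $(u_i)_{i=1}^\infty\subset C$: $\limsup_{i\to\infty}\sup_{A\subset\{1,\dots,n\}}\|\sum_{k\in A}(Tu_{i+k}-Ty)\|\le\limsup_{i\to\infty}\sup_{A\subset\{1,\dots,n\}}\|\sum_{k\in A}(u_{i+k}-y)\|$, where $\|\cdot\|$ is the norm of $X$. *)

theory Defs
  imports "HOL-Analysis.Analysis"
begin

definition lp_space :: "real \<Rightarrow> (nat \<Rightarrow> real) set" where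
  "lp_space p = {x. summable (\<lambda>n. \<bar>x n\<bar> powr p)}"

definition lp_norm :: "real \<Rightarrow> (nat \<Rightarrow> real) \<Rightarrow> real" where
  "lp_norm p x = (\<Sum>n. \<bar>x n\<bar> powr p) powr (1 / p)"

definition isomorphic_to_lp :: "real \<Rightarrow> 'a::real_normed_vector itself \<Rightarrow> bool" where
  "isomorphic_to_lp p _ \<longleftrightarrow>
     (\<exists>L :: 'a \<Rightarrow> (nat \<Rightarrow> real).
        (\<forall>x y n. L (x + y) n = L x n + L y n) \<and>
        (\<forall>c x n. L (c *\<^sub>R x) n = c * L x n) \<and>
        bij_betw L UNIV (lp_space p) \<and>
        (\<exists>a b. 0 < a \<and> 0 < b \<and>
           (\<forall>x. a * norm x \<le> lp_norm p (L x) \<and> lp_norm p (L x) \<le> b * norm x)))"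

definition nonexpansive_on :: "'a::real_normed_vector set \<Rightarrow> ('a \<Rightarrow> 'a) \<Rightarrow> bool" where
  "nonexpansive_on C T \<longleftrightarrow> (\<forall>x\<in>C. \<forall>y\<in>C. norm (T x - T y) \<le> norm (x - y))"

definition cm_quantity :: "nat \<Rightarrow> (nat \<Rightarrow> 'a::real_normed_vector) \<Rightarrow> 'a \<Rightarrow> ereal" where
  "cm_quantity n v y =
     limsup (\<lambda>i. ereal (Max ((\<lambda>A. norm (\<Sum>k\<in>A. v (i + k) - y)) ` Pow {1..n})))"

definition cm_nonexpansive :: "'a::real_normed_vector set \<Rightarrow> ('a \<Rightarrow> 'a) \<Rightarrow> bool" where
  "cm_nonexpansive C T \<longleftrightarrow>
     (\<forall>x\<in>C. T x \<in> C) \<and> nonexpansive_on C T \<and>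
     (\<forall>n::nat. \<forall>y\<in>C. \<forall>u::nat \<Rightarrow> 'a. (\<forall>i. u i \<in> C) \<longrightarrow>
        cm_quantity n (\<lambda>i. T (u i)) (T y) \<le> cm_quantity n u y)"

end

theory Submission
  imports Defs "HOL-Complex_Analysis.Great_Picard"
begin

definition Sp :: "real \<Rightarrow> (nat \<Rightarrow> real) \<Rightarrow> real" where
  "Sp p x = (\<Sum>n. \<bar>x n\<bar> powr p)"

lemma Sp_nonneg: "x \<in> lp_space p \<Longrightarrow> 0 \<le> Sp p x"
  unfolding Sp_def lp_space_def by (auto intro: suminf_nonneg)

lemma lp_norm_Sp: "lp_norm p x = Sp p x powr (1/p)"
  unfolding lp_norm_def Sp_def ..

lemma Sp_lp_norm: assumes "p > 0" "x \<in> lp_space p" shows "Sp p x = lp_norm p x powr p"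
  using assms Sp_nonneg[of x p] by (simp add: lp_norm_Sp powr_powr)

lemma coord_le_lp_norm:
  assumes "p > 0" "x \<in> lp_space p"
  shows "\<bar>x n\<bar> \<le> lp_norm p x"
proof -
  have "\<bar>x n\<bar> powr p \<le> Sp p x"
    using sum_le_suminf[of "\<lambda>n. \<bar>x n\<bar> powr p" "{n}"] assms
    unfolding Sp_def lp_space_def by auto
  then have "(\<bar>x n\<bar> powr p) powr (1/p) \<le> Sp p x powr (1/p)"
    using assms by (intro powr_mono2) auto
  then show ?thesis using assms by (simp add: powr_powr lp_norm_Sp)
qed

lemma lp_norm_le_iff: assumes "p > 0" "0 \<le> M" "x \<in> lp_space p" shows "lp_norm p x \<le> M \<longleftrightarrow> Sp p x \<le> M powr p"
proof
  assume "lp_norm p x \<le> M"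
  then show "Sp p x \<le> M powr p" using assms by (simp add: Sp_lp_norm powr_mono2 lp_norm_def)
next
  assume "Sp p x \<le> M powr p"
  then have "Sp p x powr (1/p) \<le> (M powr p) powr (1/p)" using assms Sp_nonneg by (intro powr_mono2) auto
  then show "lp_norm p x \<le> M" using assms by (simp add: lp_norm_Sp powr_powr)
qed

lemma pointwise_disj:
  fixes b :: "'k \<Rightarrow> nat \<Rightarrow> real"
  assumes fin: "finite A"
  and disj: "\<And>k k'. k\<in>A \<Longrightarrow> k'\<in>A \<Longrightarrow> k\<noteq>k' \<Longrightarrow> b k n = 0 \<or> b k' n = 0"
  shows "\<bar>\<Sum>k\<in>A. b k n\<bar> powr p = (\<Sum>k\<in>A. \<bar>b k n\<bar> powr p)"
proof (cases "\<exists>k0\<in>A. b k0 n \<noteq> 0")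
  case True
  then obtain k0 where k0: "k0 \<in> A" "b k0 n \<noteq> 0" by blast
  have z: "\<And>k. k \<in> A - {k0} \<Longrightarrow> b k n = 0" using disj k0 by blast
  have "(\<Sum>k\<in>A. b k n) = b k0 n + (\<Sum>k\<in>A-{k0}. b k n)" using fin k0 by (simp add: sum.remove)
  also have "(\<Sum>k\<in>A-{k0}. b k n) = 0" using z by simp
  moreover have "(\<Sum>k\<in>A. \<bar>b k n\<bar> powr p) = \<bar>b k0 n\<bar> powr p + (\<Sum>k\<in>A-{k0}. \<bar>b k n\<bar> powr p)"
    using fin k0 by (simp add: sum.remove)
  moreover have "(\<Sum>k\<in>A-{k0}. \<bar>b k n\<bar> powr p) = 0" using z by (simp add: powr_def)
  ultimately show ?thesis by simp
next
  case False then show ?thesis by simp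
qed

lemma Sp_disjoint_sum:
  fixes b :: "'k \<Rightarrow> nat \<Rightarrow> real"
  assumes fin: "finite A" and lp: "\<And>k. k\<in>A \<Longrightarrow> b k \<in> lp_space p"
  and disj: "\<And>n k k'. k\<in>A \<Longrightarrow> k'\<in>A \<Longrightarrow> k\<noteq>k' \<Longrightarrow> b k n = 0 \<or> b k' n = 0"
  shows "(\<lambda>n. \<Sum>k\<in>A. b k n) \<in> lp_space p" "Sp p (\<lambda>n. \<Sum>k\<in>A. b k n) = (\<Sum>k\<in>A. Sp p (b k))"
proof -
  have pw: "\<bar>\<Sum>k\<in>A. b k n\<bar> powr p = (\<Sum>k\<in>A. \<bar>b k n\<bar> powr p)" for n
    using pointwise_disj[of A b n p, OF fin] disj by blast
  have sm: "summable (\<lambda>n. \<Sum>k\<in>A. \<bar>b k n\<bar> powr p)"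
    using lp by (intro summable_sum) (auto simp: lp_space_def)
  then show "(\<lambda>n. \<Sum>k\<in>A. b k n) \<in> lp_space p" unfolding lp_space_def by (simp add: pw)
  show "Sp p (\<lambda>n. \<Sum>k\<in>A. b k n) = (\<Sum>k\<in>A. Sp p (b k))"
    unfolding Sp_def pw using lp by (intro suminf_sum) (auto simp: lp_space_def)
qed

definition Pchoice :: "real \<Rightarrow> (nat \<Rightarrow> nat \<Rightarrow> real) \<Rightarrow> real \<Rightarrow> nat \<Rightarrow> nat \<Rightarrow> nat \<times> nat \<Rightarrow> bool" where
  "Pchoice p w d T0 M tm \<longleftrightarrow> T0 \<le> fst tm \<and> M < snd tm \<and>
     (\<Sum>n<M. \<bar>w (fst tm) n\<bar> powr p) < d \<and> (\<Sum>j. \<bar>w (fst tm) (j + snd tm)\<bar> powr p) < d"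

definition chooseH where "chooseH p w d T0 M = (SOME tm. Pchoice p w d T0 M tm)"

primrec seqH :: "real \<Rightarrow> (nat \<Rightarrow> nat \<Rightarrow> real) \<Rightarrow> (nat \<Rightarrow> real) \<Rightarrow> nat \<Rightarrow> nat \<times> nat" where
  "seqH p w e 0 = chooseH p w (e 0 / 2) 0 0"
| "seqH p w e (Suc k) = chooseH p w (e (Suc k) / 2) (Suc (fst (seqH p w e k))) (snd (seqH p w e k))"

lemma hump:
  fixes w :: "nat \<Rightarrow> nat \<Rightarrow> real"
  assumes p: "p > 0" and lp: "\<And>i. w i \<in> lp_space p" and null: "\<And>n. (\<lambda>i. w i n) \<longlonglongrightarrow> 0"
   and eps: "\<And>k. e k > 0"
  obtains t m where "strict_mono t" "strict_mono m"
    "\<And>k. (\<lambda>n. if m k \<le> n \<and> n < m (Suc k) then 0 else w (t k) n) \<in> lp_space p"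
    "\<And>k. Sp p (\<lambda>n. if m k \<le> n \<and> n < m (Suc k) then 0 else w (t k) n) \<le> e k"
proof -
  have ex: "\<exists>tm. Pchoice p w d T0 M tm" if d: "d > 0" for d T0 M
  proof -
    have "((\<lambda>i. \<Sum>n<M. \<bar>w i n\<bar> powr p) \<longlongrightarrow> (\<Sum>n<M. \<bar>0::real\<bar> powr p)) sequentially"
      using p null by (intro tendsto_sum tendsto_powr2 tendsto_rabs) auto
    then have "((\<lambda>i. \<Sum>n<M. \<bar>w i n\<bar> powr p) \<longlongrightarrow> 0) sequentially" by simp
    then have "eventually (\<lambda>i. (\<Sum>n<M. \<bar>w i n\<bar> powr p) < d) sequentially"
      using d by (rule order_tendstoD)
    then obtain N where N: "\<And>i. i \<ge> N \<Longrightarrow> (\<Sum>n<M. \<bar>w i n\<bar> powr p) < d"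
      unfolding eventually_sequentially by blast
    define t where "t = max N T0"
    have ht: "(\<Sum>n<M. \<bar>w t n\<bar> powr p) < d" "T0 \<le> t" using N unfolding t_def by auto
    have "summable (\<lambda>n. \<bar>w t n\<bar> powr p)" using lp unfolding lp_space_def by auto
    from suminf_exist_split[OF d this] obtain N2 where
      N2: "\<And>n. n \<ge> N2 \<Longrightarrow> norm (\<Sum>j. \<bar>w t (j + n)\<bar> powr p) < d" by blast
    define m where "m = max N2 (Suc M)"
    have "(\<Sum>j. \<bar>w t (j + m)\<bar> powr p) < d"
      using N2[of m] unfolding m_def by (auto simp: abs_less_iff)
    then have "Pchoice p w d T0 M (t, m)" using ht unfolding Pchoice_def m_def by auto
    then show ?thesis by blast
  qed
  have chooseP: "Pchoice p w d T0 M (chooseH p w d T0 M)" if "d > 0" for d T0 M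
    unfolding chooseH_def using ex[OF that] by (rule someI_ex)
  define t where "t k = fst (seqH p w e k)" for k
  define m where "m k = (case k of 0 \<Rightarrow> 0 | Suc j \<Rightarrow> snd (seqH p w e j))" for k
  define T0 where "T0 k = (case k of 0 \<Rightarrow> 0 | Suc j \<Rightarrow> Suc (t j))" for k
  have seqk: "seqH p w e k = chooseH p w (e k / 2) (T0 k) (m k)" for k
    by (cases k) (auto simp: T0_def m_def t_def)
  have P: "Pchoice p w (e k / 2) (T0 k) (m k) (seqH p w e k)" for k
    unfolding seqk using eps by (intro chooseP) auto
  have tm: "t k = fst (seqH p w e k)" "m (Suc k) = snd (seqH p w e k)" for k
    by (auto simp: t_def m_def)
  have mono_m: "m k < m (Suc k)" for k using P[of k] unfolding Pchoice_def tm by auto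
  have mono_t: "t k < t (Suc k)" for k using P[of "Suc k"] unfolding Pchoice_def tm T0_def by auto
  have head: "(\<Sum>n<m k. \<bar>w (t k) n\<bar> powr p) < e k / 2" for k
    using P[of k] unfolding Pchoice_def tm by auto
  have tail: "(\<Sum>j. \<bar>w (t k) (j + m (Suc k))\<bar> powr p) < e k / 2" for k
    using P[of k] unfolding Pchoice_def tm by auto
  define E where "E k n = (if m k \<le> n \<and> n < m (Suc k) then 0 else w (t k) n)" for k n
  have Elp: "summable (\<lambda>n. \<bar>E k n\<bar> powr p)" for k
  proof (rule summable_comparison_test)
    show "summable (\<lambda>n. \<bar>w (t k) n\<bar> powr p)" using lp unfolding lp_space_def by auto
    show "\<exists>N. \<forall>n\<ge>N. norm (\<bar>E k n\<bar> powr p) \<le> \<bar>w (t k) n\<bar> powr p"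
      by (auto simp: E_def)
  qed
  have ES: "Sp p (E k) \<le> e k" for k
  proof -
    let ?K = "m (Suc k)"
    have "Sp p (E k) = (\<Sum>j. \<bar>E k (j + ?K)\<bar> powr p) + (\<Sum>n<?K. \<bar>E k n\<bar> powr p)"
      unfolding Sp_def using Elp by (rule suminf_split_initial_segment)
    also have "(\<Sum>j. \<bar>E k (j + ?K)\<bar> powr p) = (\<Sum>j. \<bar>w (t k) (j + ?K)\<bar> powr p)"
      by (simp add: E_def)
    also have "(\<Sum>n<?K. \<bar>E k n\<bar> powr p) = (\<Sum>n<m k. \<bar>w (t k) n\<bar> powr p)"
    proof -
      have "(\<Sum>n<?K. \<bar>E k n\<bar> powr p) = (\<Sum>n\<in>{0..<m k}. \<bar>E k n\<bar> powr p) + (\<Sum>n\<in>{m k..<?K}. \<bar>E k n\<bar> powr p)"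
        using mono_m[of k] by (simp add: atLeast0LessThan[symmetric] sum.atLeastLessThan_concat)
      also have "(\<Sum>n\<in>{m k..<?K}. \<bar>E k n\<bar> powr p) = 0" by (simp add: E_def)
      also have "(\<Sum>n\<in>{0..<m k}. \<bar>E k n\<bar> powr p) = (\<Sum>n<m k. \<bar>w (t k) n\<bar> powr p)"
        by (simp add: E_def atLeast0LessThan)
      finally show ?thesis by simp
    qed
    finally show ?thesis using head[of k] tail[of k] by simp
  qed
  show ?thesis
  proof (rule that)
    show "strict_mono t" using mono_t by (simp add: strict_mono_Suc_iff)
    show "strict_mono m" using mono_m by (simp add: strict_mono_Suc_iff)
    show "(\<lambda>n. if m k \<le> n \<and> n < m (Suc k) then 0 else w (t k) n) \<in> lp_space p" for k
      using Elp[of k] unfolding lp_space_def E_def by simp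
    show "Sp p (\<lambda>n. if m k \<le> n \<and> n < m (Suc k) then 0 else w (t k) n) \<le> e k" for k
      using ES[of k] unfolding E_def by simp
  qed
qed

lemma approx_fix:
  fixes C :: "'a::banach set" and T :: "'a \<Rightarrow> 'a"
  assumes "C \<noteq> {}" "bounded C" "closed C" "convex C" "\<forall>x\<in>C. T x \<in> C"
    "nonexpansive_on C T" "e > 0"
  shows "\<exists>x\<in>C. norm (T x - x) \<le> e"
proof -
  obtain x0 where x0: "x0 \<in> C" using assms by blast
  obtain D where D: "D > 0" "\<And>x. x \<in> C \<Longrightarrow> norm x \<le> D" using assms(2) bounded_pos by blast
  define c where "c = e / (2*D + e)"
  have c: "0 < c" "c < 1" using D assms(7) by (auto simp: c_def field_simps)
  define f where "f x = c *\<^sub>R x0 + (1 - c) *\<^sub>R T x" for x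
  have fC: "f ` C \<subseteq> C"
  proof
    fix z assume "z \<in> f ` C"
    then obtain x where x: "x \<in> C" "z = f x" by blast
    show "z \<in> C" unfolding x f_def
      using assms(4) x0 assms(5) x c unfolding convex_def by auto
  qed
  have lip: "dist (f x) (f y) \<le> (1 - c) * dist x y" if "x \<in> C" "y \<in> C" for x y
  proof -
    have "f x - f y = (1 - c) *\<^sub>R (T x - T y)" by (simp add: f_def algebra_simps)
    then have "dist (f x) (f y) = (1 - c) * norm (T x - T y)" using c by (simp add: dist_norm)
    also have "\<dots> \<le> (1 - c) * norm (x - y)"
      using assms(6) that c unfolding nonexpansive_on_def by (intro mult_left_mono) auto
    finally show ?thesis by (simp add: dist_norm)
  qed
  have "complete C" using assms(3) by (simp add: complete_eq_closed)
  from Banach_fix[OF this assms(1) _ _ fC lip] c obtain x where x: "x \<in> C" "f x = x" by auto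
  have "T x - x = c *\<^sub>R (T x - x0)"
  proof -
    have "T x - x = T x - f x" using x by simp
    also have "\<dots> = c *\<^sub>R (T x - x0)" by (simp add: f_def algebra_simps)
    finally show ?thesis .
  qed
  then have "norm (T x - x) = c * norm (T x - x0)" using c by simp
  also have "\<dots> \<le> c * (2 * D)"
  proof -
    have "norm (T x - x0) \<le> norm (T x) + norm x0" by (rule norm_triangle_ineq4)
    also have "\<dots> \<le> 2 * D" using D assms(5) x x0 by (smt (verit))
    finally show ?thesis using c by (intro mult_left_mono) auto
  qed
  also have "\<dots> \<le> e" using D assms(7) by (simp add: c_def field_simps)
  finally show ?thesis using x by blast
qed

lemma g_over_n_tendsto:
  fixes p M a :: real
  assumes "p > 1" "a > 0"
  shows "(\<lambda>N. ((real N powr (1/p) * M + 2) / a) / real N) \<longlonglongrightarrow> 0"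
proof -
  have 1: "(\<lambda>N. real N powr (1/p - 1)) \<longlonglongrightarrow> 0"
    using assms by (intro tendsto_neg_powr filterlim_real_sequentially) (auto simp: field_simps)
  have 2: "(\<lambda>N. 1 / real N) \<longlonglongrightarrow> 0" by (rule lim_1_over_n)
  have 3: "(\<lambda>N. (M/a) * real N powr (1/p - 1) + (2/a) * (1 / real N)) \<longlonglongrightarrow> (M/a) * 0 + (2/a) * 0"
    by (intro tendsto_intros 1 2)
  have ev: "eventually (\<lambda>N. (M/a) * real N powr (1/p - 1) + (2/a) * (1 / real N) =
      ((real N powr (1/p) * M + 2) / a) / real N) sequentially"
    using eventually_gt_at_top[of "0::nat"]
  proof eventually_elim
    case (elim N)
    then have "real N powr (1/p - 1) = real N powr (1/p) / real N"
      by (simp add: powr_diff)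
    then show ?case using elim assms by (simp add: field_simps)
  qed
  show ?thesis using Lim_transform_eventually[OF 3 ev] by simp
qed

lemma decomp_lemma:
  fixes f g :: "'i \<Rightarrow> 'b::real_vector"
  shows "(\<Sum>k\<in>A. f k - c) = (\<Sum>k\<in>A. g k - d) + (\<Sum>k\<in>A. f k - g k) + (\<Sum>k\<in>A. d - c)"
proof -
  have "(\<Sum>k\<in>A. g k - d) + (\<Sum>k\<in>A. f k - g k) + (\<Sum>k\<in>A. d - c) =
      (\<Sum>k\<in>A. (g k - d) + (f k - g k) + (d - c))"
    by (simp only: sum.distrib)
  also have "\<dots> = (\<Sum>k\<in>A. f k - c)" by (rule sum.cong) (auto simp: algebra_simps)
  finally show ?thesis by simp
qed

lemma tri3:
  fixes W X Y Z :: "'b::real_normed_vector"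
  assumes "W = X + Y + Z"
  shows "norm Z \<le> norm W + norm X + norm Y"
proof -
  have "Z = W - X - Y" using assms by (simp add: algebra_simps)
  then have "norm Z \<le> norm (W - X) + norm Y" using norm_triangle_ineq4[of "W - X" Y] by simp
  also have "norm (W - X) \<le> norm W + norm X" by (rule norm_triangle_ineq4)
  finally show ?thesis by simp
qed

theorem corollary4p10:
  fixes p :: real and C :: "'a::banach set" and T :: "'a \<Rightarrow> 'a"
  assumes "1 < p"
    and "isomorphic_to_lp p TYPE('a)"
    and "C \<noteq> {}" and "bounded C" and "closed C" and "convex C"
    and "cm_nonexpansive C T"
  shows "\<exists>x\<in>C. T x = x"
proof -
  have p0: "p > 0" using assms(1) by simp
  obtain L :: "'a \<Rightarrow> nat \<Rightarrow> real" and a b where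
    Ladd: "\<And>x y n. L (x + y) n = L x n + L y n" and
    Lsc: "\<And>c x n. L (c *\<^sub>R x) n = c * L x n" and
    bij: "bij_betw L UNIV (lp_space p)" and ab: "a > 0" "b > 0" and
    Lb: "\<And>x. a * norm x \<le> lp_norm p (L x) \<and> lp_norm p (L x) \<le> b * norm x"
    using assms(2) unfolding isomorphic_to_lp_def by blast
  have L0: "L 0 n = 0" for n using Lsc[of 0 0 n] by simp
  have Ldiff: "L (x - y) n = L x n - L y n" for x y n
    using Ladd[of x "(-1) *\<^sub>R y" n] Lsc[of "-1" y n] by simp
  have Lsum: "finite B \<Longrightarrow> L (\<Sum>j\<in>B. f j) n = (\<Sum>j\<in>B. L (f j) n)" for B f n
    by (induction B rule: finite_induct) (auto simp: L0 Ladd)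
  have Lin: "L x \<in> lp_space p" for x by (rule bij_betw_apply[OF bij UNIV_I])
  have Linv: "z \<in> lp_space p \<Longrightarrow> L (inv_into UNIV L z) = z" for z
    by (rule bij_betw_inv_into_right[OF bij])
  have normL: "norm x \<le> lp_norm p (L x) / a" for x using Lb[of x] ab by (simp add: field_simps)
  have Tin: "\<forall>x\<in>C. T x \<in> C" and ne: "nonexpansive_on C T"
    and cmT: "\<And>n y u. y \<in> C \<Longrightarrow> (\<forall>i. u i \<in> C) \<Longrightarrow>
        cm_quantity n (\<lambda>i. T (u i)) (T y) \<le> cm_quantity n u y"
    using assms(7) unfolding cm_nonexpansive_def by auto
  have "\<forall>i::nat. \<exists>x\<in>C. norm (T x - x) \<le> 1 / (real i + 1)"
    using approx_fix[OF assms(3-6) Tin ne] by simp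
  then obtain xs where xsC: "\<And>i. xs i \<in> C" and xsT: "\<And>i. norm (T (xs i) - xs i) \<le> 1 / (real i + 1)"
    by metis
  obtain R where R: "R > 0" "\<And>x. x \<in> C \<Longrightarrow> norm x \<le> R" using assms(4) bounded_pos by blast
  have LxR: "lp_norm p (L (xs i)) \<le> b * R" for i
    using Lb[of "xs i"] R(2)[OF xsC[of i]] ab by (smt (verit) mult_left_mono)
  have coordb: "norm (L (xs i) n) \<le> b * R" for i n
    using coord_le_lp_norm[OF p0 Lin, of "xs i" n] LxR[of i] by simp
  obtain s where s: "strict_mono s" and sconv: "\<And>n. \<exists>l. (\<lambda>i. L (xs (s i)) n) \<longlonglongrightarrow> l"
    using function_convergent_subsequence[of "UNIV::nat set" "\<lambda>i n. L (xs i) n" "b * R"] coordb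
    by auto
  define z where "z n = lim (\<lambda>i. L (xs (s i)) n)" for n
  have zlim: "(\<lambda>i. L (xs (s i)) n) \<longlonglongrightarrow> z n" for n
  proof -
    obtain l where l: "(\<lambda>i. L (xs (s i)) n) \<longlonglongrightarrow> l" using sconv[of n] by blast
    then have "lim (\<lambda>i. L (xs (s i)) n) = l" by (rule limI)
    then show ?thesis using l unfolding z_def by simp
  qed
  have zlp: "z \<in> lp_space p"
    unfolding lp_space_def
  proof (safe intro!: bounded_imp_summable)
    fix N
    have lim: "(\<lambda>i. \<Sum>k\<le>N. \<bar>L (xs (s i)) k\<bar> powr p) \<longlonglongrightarrow> (\<Sum>k\<le>N. \<bar>z k\<bar> powr p)"
      using p0 zlim by (intro tendsto_sum tendsto_powr2 tendsto_rabs) auto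
    have le: "(\<Sum>k\<le>N. \<bar>L (xs (s i)) k\<bar> powr p) \<le> (b * R) powr p" for i
    proof -
      have "(\<Sum>k\<le>N. \<bar>L (xs (s i)) k\<bar> powr p) \<le> Sp p (L (xs (s i)))"
        unfolding Sp_def using Lin[of "xs (s i)"] unfolding lp_space_def
        by (intro sum_le_suminf) auto
      also have "\<dots> \<le> (b * R) powr p"
        using lp_norm_le_iff[OF p0 _ Lin, of "b*R" "xs (s i)"] LxR[of "s i"] ab R by simp
      finally show ?thesis .
    qed
    show "(\<Sum>k\<le>N. \<bar>z k\<bar> powr p) \<le> (b * R) powr p"
      using lim le by (intro LIMSEQ_le_const2[OF lim]) auto
  qed auto
  define y where "y = inv_into UNIV L z"
  have Ly: "L y = z" using Linv[OF zlp] unfolding y_def .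
  define w where "w i = L (xs (s i) - y)" for i
  have wlp: "w i \<in> lp_space p" for i unfolding w_def by (rule Lin)
  have wnull: "(\<lambda>i. w i n) \<longlonglongrightarrow> 0" for n
  proof -
    have "(\<lambda>i. L (xs (s i)) n - z n) \<longlonglongrightarrow> z n - z n" by (intro tendsto_intros zlim)
    then show ?thesis unfolding w_def Ldiff Ly by simp
  qed
  define M where "M = b * (R + norm y)"
  have M0: "M \<ge> 0" using ab R unfolding M_def by auto
  have wM: "lp_norm p (w i) \<le> M" for i
  proof -
    have "lp_norm p (w i) \<le> b * norm (xs (s i) - y)" unfolding w_def using Lb[of "xs (s i) - y"] by simp
    also have "\<dots> \<le> b * (R + norm y)"
      using R(2)[OF xsC[of "s i"]] norm_triangle_ineq4[of "xs (s i)" y] ab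
      by (intro mult_left_mono) auto
    finally show ?thesis unfolding M_def .
  qed
  define e where "e k = ((1/2::real)^k) powr p" for k
  have epos: "e k > 0" for k unfolding e_def by simp
  obtain t m where t: "strict_mono t" and m: "strict_mono m"
    and Elp: "\<And>k. (\<lambda>n. if m k \<le> n \<and> n < m (Suc k) then 0 else w (t k) n) \<in> lp_space p"
    and ES: "\<And>k. Sp p (\<lambda>n. if m k \<le> n \<and> n < m (Suc k) then 0 else w (t k) n) \<le> e k"
    using hump[of p w e, OF p0 wlp wnull epos] by blast
  define u where "u j = xs (s (t j))" for j
  have uC: "u j \<in> C" for j unfolding u_def by (rule xsC)
  have wu: "w (t j) = L (u j - y)" for j unfolding w_def u_def ..
  define g where "g N = (real N powr (1/p) * M + 2) / a" for N :: nat
  have key: "norm (\<Sum>j\<in>B. (u j - y)) \<le> g (card B)" if finB: "finite B" for B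
  proof -
    define bb where "bb j n = (if m j \<le> n \<and> n < m (Suc j) then w (t j) n else 0)" for j n
    have bblp: "bb j \<in> lp_space p" for j
      unfolding lp_space_def bb_def by (auto intro!: summable_finite[of "{m j..<m (Suc j)}"])
    define \<beta> where "\<beta> j = inv_into UNIV L (bb j)" for j
    have L\<beta>: "L (\<beta> j) = bb j" for j unfolding \<beta>_def by (rule Linv[OF bblp])
    define \<epsilon> where "\<epsilon> j = (u j - y) - \<beta> j" for j
    have L\<epsilon>: "L (\<epsilon> j) = (\<lambda>n. if m j \<le> n \<and> n < m (Suc j) then 0 else w (t j) n)" for j
    proof
      fix n
      have "L (\<epsilon> j) n = L (u j - y) n - L (\<beta> j) n" unfolding \<epsilon>_def by (rule Ldiff)
      then show "L (\<epsilon> j) n = (if m j \<le> n \<and> n < m (Suc j) then 0 else w (t j) n)"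
        by (simp add: wu L\<beta> bb_def)
    qed
    have \<epsilon>norm: "norm (\<epsilon> j) \<le> (1/2)^j / a" for j
    proof -
      have "lp_norm p (L (\<epsilon> j)) = Sp p (L (\<epsilon> j)) powr (1/p)" by (rule lp_norm_Sp)
      also have "\<dots> \<le> (e j) powr (1/p)"
        using ES[of j] Sp_nonneg[OF Lin[of "\<epsilon> j"]] p0 unfolding L\<epsilon> by (intro powr_mono2) auto
      also have "\<dots> = (1/2)^j" unfolding e_def using p0 by (simp add: powr_powr)
      finally have "lp_norm p (L (\<epsilon> j)) \<le> (1/2)^j" .
      then have "lp_norm p (L (\<epsilon> j)) / a \<le> (1/2)^j / a" using ab by (intro divide_right_mono) auto
      then show ?thesis using normL[of "\<epsilon> j"] by linarith
    qed
    have disj: "bb j n = 0 \<or> bb j' n = 0" if "j \<noteq> j'" for j j' n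
    proof (rule ccontr)
      assume "\<not> ?thesis"
      then have h: "m j \<le> n" "n < m (Suc j)" "m j' \<le> n" "n < m (Suc j')"
        unfolding bb_def by (auto split: if_splits)
      show False
      proof (cases "j < j'")
        case True then have "m (Suc j) \<le> m j'" using m by (simp add: strict_mono_less_eq Suc_leI)
        then show False using h by simp
      next
        case False then have "j' < j" using that by simp
        then have "m (Suc j') \<le> m j" using m by (simp add: strict_mono_less_eq Suc_leI)
        then show False using h by simp
      qed
    qed
    have Lsum\<beta>: "L (\<Sum>j\<in>B. \<beta> j) = (\<lambda>n. \<Sum>j\<in>B. bb j n)"
      by (rule ext) (simp add: Lsum[OF finB] L\<beta>)
    have SD: "Sp p (\<lambda>n. \<Sum>j\<in>B. bb j n) = (\<Sum>j\<in>B. Sp p (bb j))"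
      by (rule Sp_disjoint_sum(2)[of B bb p, OF finB bblp disj]) auto
    have bbS: "Sp p (bb j) \<le> M powr p" for j
    proof -
      have "Sp p (bb j) \<le> Sp p (w (t j))" unfolding Sp_def using bblp[of j] wlp[of "t j"]
        unfolding lp_space_def by (intro suminf_le) (auto simp: bb_def)
      also have "\<dots> \<le> M powr p" using lp_norm_le_iff[OF p0 M0 wlp] wM by blast
      finally show ?thesis .
    qed
    have "(\<Sum>j\<in>B. Sp p (bb j)) \<le> real (card B) * M powr p"
      using bbS sum_bounded_above[of B "\<lambda>j. Sp p (bb j)" "M powr p"] by auto
    then have "(\<Sum>j\<in>B. Sp p (bb j)) powr (1/p) \<le> (real (card B) * M powr p) powr (1/p)"
      using p0 by (intro powr_mono2 sum_nonneg Sp_nonneg bblp) auto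
    also have "\<dots> = real (card B) powr (1/p) * M" using M0 p0 by (simp add: powr_mult powr_powr)
    finally have lpb: "lp_norm p (L (\<Sum>j\<in>B. \<beta> j)) \<le> real (card B) powr (1/p) * M"
      unfolding Lsum\<beta> lp_norm_Sp SD .
    have nb: "norm (\<Sum>j\<in>B. \<beta> j) \<le> real (card B) powr (1/p) * M / a"
      using normL[of "\<Sum>j\<in>B. \<beta> j"] divide_right_mono[OF lpb, of a] ab by linarith
    have geo: "(\<Sum>j\<in>B. (1/2::real)^j) \<le> 2"
    proof -
      have "(\<Sum>j\<in>B. (1/2::real)^j) \<le> (\<Sum>j. (1/2::real)^j)"
        by (rule sum_le_suminf[OF summable_geometric finB]) auto
      also have "\<dots> = 2" by (simp add: suminf_geometric)
      finally show ?thesis .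
    qed
    have ne: "(\<Sum>j\<in>B. norm (\<epsilon> j)) \<le> 2 / a"
    proof -
      have "(\<Sum>j\<in>B. norm (\<epsilon> j)) \<le> (\<Sum>j\<in>B. (1/2)^j / a)" by (intro sum_mono \<epsilon>norm)
      also have "\<dots> = (\<Sum>j\<in>B. (1/2::real)^j) / a" by (simp add: sum_divide_distrib)
      also have "\<dots> \<le> 2 / a" using geo ab by (intro divide_right_mono) auto
      finally show ?thesis .
    qed
    have "(\<Sum>j\<in>B. (u j - y)) = (\<Sum>j\<in>B. \<beta> j) + (\<Sum>j\<in>B. \<epsilon> j)"
      by (simp add: \<epsilon>_def sum.distrib[symmetric])
    then have "norm (\<Sum>j\<in>B. (u j - y)) \<le> norm (\<Sum>j\<in>B. \<beta> j) + (\<Sum>j\<in>B. norm (\<epsilon> j))"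
      using norm_triangle_ineq[of "\<Sum>j\<in>B. \<beta> j" "\<Sum>j\<in>B. \<epsilon> j"] norm_sum[of \<epsilon> B] by simp
    also have "\<dots> \<le> real (card B) powr (1/p) * M / a + 2 / a" using nb ne by simp
    also have "\<dots> = g (card B)" unfolding g_def by (simp add: add_divide_distrib)
    finally show ?thesis .
  qed
  have gmono: "g k \<le> g n" if "k \<le> n" for k n
  proof -
    have "real k powr (1/p) \<le> real n powr (1/p)" using that p0 by (intro powr_mono2) auto
    then have "real k powr (1/p) * M + 2 \<le> real n powr (1/p) * M + 2" using M0
      by (simp add: mult_right_mono)
    then show ?thesis unfolding g_def using ab by (intro divide_right_mono) auto
  qed
  have key2: "norm (\<Sum>k\<in>A. u (i + k) - y) \<le> g n" if A: "A \<subseteq> {1..n}" for A i n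
  proof -
    have finA: "finite A" using A finite_subset by blast
    have inj: "inj_on ((+) i) A" by (auto simp: inj_on_def)
    have "(\<Sum>k\<in>A. u (i + k) - y) = (\<Sum>j\<in>(+) i ` A. u j - y)"
      by (simp add: sum.reindex[OF inj])
    moreover have "card ((+) i ` A) = card A" by (rule card_image[OF inj])
    moreover have "card A \<le> n" using card_mono[OF _ A] by simp
    ultimately show ?thesis using key[of "(+) i ` A"] finA gmono[of "card A" n] by simp
  qed
  define avg where "avg n = (\<Sum>j<Suc n. (1 / real (Suc n)) *\<^sub>R u j)" for n
  have avgC: "avg n \<in> C" for n
    unfolding avg_def by (rule convex_sum[OF _ assms(6)]) (auto simp: uC)
  have avgd0: "(1 / real N) *\<^sub>R (\<Sum>j<N. u j - y) = (1 / real N) *\<^sub>R (\<Sum>j<N. u j) - y"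
    if "N > 0" for N
  proof -
    have "(\<Sum>j<N. u j - y) = (\<Sum>j<N. u j) - real N *\<^sub>R y"
      by (simp only: sum_subtractf sum_constant_scaleR card_lessThan)
    then have "(1 / real N) *\<^sub>R (\<Sum>j<N. u j - y) = (1 / real N) *\<^sub>R (\<Sum>j<N. u j) - ((1 / real N) * real N) *\<^sub>R y"
      by (simp only: scaleR_diff_right scaleR_scaleR)
    then show ?thesis using that by simp
  qed
  have avgd: "avg n - y = (1 / real (Suc n)) *\<^sub>R (\<Sum>j<Suc n. u j - y)" for n
    unfolding avg_def avgd0[of "Suc n", OF zero_less_Suc] by (simp only: scaleR_sum_right)
  have avgn: "norm (avg n - y) \<le> g (Suc n) / real (Suc n)" for n
  proof -
    have "norm (avg n - y) = norm (\<Sum>j<Suc n. u j - y) / real (Suc n)" unfolding avgd by simp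
    also have "\<dots> \<le> g (Suc n) / real (Suc n)"
      using key[of "{..<Suc n}"] by (intro divide_right_mono) auto
    finally show ?thesis .
  qed
  have gn0: "(\<lambda>n. g n / real n) \<longlonglongrightarrow> 0"
    unfolding g_def by (rule g_over_n_tendsto[OF assms(1) ab(1)])
  have "(\<lambda>n. avg n - y) \<longlonglongrightarrow> 0"
    by (rule Lim_null_comparison[OF always_eventually[OF allI[OF avgn]]])
       (rule LIMSEQ_Suc[OF gn0])
  then have "avg \<longlonglongrightarrow> y" by (rule LIM_zero_cancel)
  then have yC: "y \<in> C" by (rule closed_sequentially[OF assms(5) avgC])
  define d where "d = norm (y - T y)"
  have st: "strict_mono (s \<circ> t)" using s t by (rule strict_mono_o)
  have bound: "real n * d \<le> 2 * g n + 1" if n1: "n \<ge> 1" for n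
  proof -
    have Tu: "\<forall>i. u i \<in> C" using uC by blast
    have cm: "cm_quantity n (\<lambda>i. T (u i)) (T y) \<le> cm_quantity n u y" by (rule cmT[OF yC Tu])
    have up: "cm_quantity n u y \<le> ereal (g n)"
      unfolding cm_quantity_def
    proof (rule Limsup_bounded[OF always_eventually[OF allI]])
      fix i
      have "Max ((\<lambda>A. norm (\<Sum>k\<in>A. u (i + k) - y)) ` Pow {1..n}) \<le> g n"
        by (subst Max_le_iff) (auto simp: key2)
      then show "ereal (Max ((\<lambda>A. norm (\<Sum>k\<in>A. u (i + k) - y)) ` Pow {1..n})) \<le> ereal (g n)"
        by simp
    qed
    have low: "ereal (real n * d - g n - 1) \<le> cm_quantity n (\<lambda>i. T (u i)) (T y)"
      unfolding cm_quantity_def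
    proof (rule le_Limsup)
      show "sequentially \<noteq> bot" by simp
      show "\<forall>\<^sub>F i in sequentially. ereal (real n * d - g n - 1) \<le>
          ereal (Max ((\<lambda>A. norm (\<Sum>k\<in>A. T (u (i + k)) - T y)) ` Pow {1..n}))"
        using eventually_ge_at_top[of n]
      proof eventually_elim
        case (elim i)
        have mem: "{1..n} \<in> Pow {1..n}" by simp
        have mx: "norm (\<Sum>k\<in>{1..n}. T (u (i + k)) - T y) \<le>
            Max ((\<lambda>A. norm (\<Sum>k\<in>A. T (u (i + k)) - T y)) ` Pow {1..n})"
          by (rule Max_ge) (auto intro: imageI[OF mem])
        have decomp: "(\<Sum>k\<in>{1..n}. T (u (i + k)) - T y) =
            (\<Sum>k\<in>{1..n}. u (i + k) - y) + (\<Sum>k\<in>{1..n}. T (u (i + k)) - u (i + k)) + real n *\<^sub>R (y - T y)"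
        proof -
          have "real n *\<^sub>R (y - T y) = (\<Sum>k\<in>{1..n}. y - T y)" by (simp only: sum_constant_scaleR) simp
          then show ?thesis using decomp_lemma[of "\<lambda>k. T (u (i + k))" "T y" "{1..n}" "\<lambda>k. u (i + k)" y] by simp
        qed
        have n1': "norm (\<Sum>k\<in>{1..n}. u (i + k) - y) \<le> g n" by (rule key2) simp
        have each: "norm (T (u (i + k)) - u (i + k)) \<le> 1 / real n" if "k \<in> {1..n}" for k
        proof -
          have "i + k \<le> (s \<circ> t) (i + k)" by (rule seq_suble[OF st])
          then have ge: "real n \<le> real (s (t (i + k))) + 1" using elim by simp
          have "norm (T (u (i + k)) - u (i + k)) \<le> 1 / (real (s (t (i + k))) + 1)"
            unfolding u_def by (rule xsT)
          also have "\<dots> \<le> 1 / real n" using n1 ge by (intro divide_left_mono) auto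
          finally show ?thesis .
        qed
        have n2: "norm (\<Sum>k\<in>{1..n}. T (u (i + k)) - u (i + k)) \<le> 1"
        proof -
          have "norm (\<Sum>k\<in>{1..n}. T (u (i + k)) - u (i + k)) \<le> (\<Sum>k\<in>{1..n}. norm (T (u (i + k)) - u (i + k)))"
            by (rule norm_sum)
          also have "\<dots> \<le> (\<Sum>k\<in>{1..n}. 1 / real n)" by (intro sum_mono each)
          also have "\<dots> = 1" using n1 by simp
          finally show ?thesis .
        qed
        have "real n * d = norm (real n *\<^sub>R (y - T y))" unfolding d_def by simp
        also have "\<dots> \<le> norm (\<Sum>k\<in>{1..n}. T (u (i + k)) - T y) + norm (\<Sum>k\<in>{1..n}. u (i + k) - y)
            + norm (\<Sum>k\<in>{1..n}. T (u (i + k)) - u (i + k))"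
          by (rule tri3[OF decomp])
        finally have "real n * d - g n - 1 \<le> Max ((\<lambda>A. norm (\<Sum>k\<in>A. T (u (i + k)) - T y)) ` Pow {1..n})"
          using mx n1' n2 by linarith
        then show ?case by simp
      qed
    qed
    from low cm up have "ereal (real n * d - g n - 1) \<le> ereal (g n)" by (meson order_trans)
    then show ?thesis by simp
  qed
  have d0: "d = 0"
  proof (rule ccontr)
    assume "d \<noteq> 0"
    then have dpos: "d > 0" unfolding d_def by simp
    have "(\<lambda>n. 2 * (g n / real n) + 1 / real n) \<longlonglongrightarrow> 2 * 0 + 0"
      by (intro tendsto_intros gn0 lim_1_over_n)
    then have "eventually (\<lambda>n. 2 * (g n / real n) + 1 / real n < d) sequentially"
      using dpos by (intro order_tendstoD(2)) auto
    then obtain N where N: "\<And>n. n \<ge> N \<Longrightarrow> 2 * (g n / real n) + 1 / real n < d"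
      unfolding eventually_sequentially by blast
    define n where "n = max N 1"
    have n1: "n \<ge> 1" "n \<ge> N" unfolding n_def by auto
    have "real n * d \<le> 2 * g n + 1" by (rule bound[OF n1(1)])
    then have "d \<le> (2 * g n + 1) / real n" using n1 by (simp add: field_simps)
    also have "\<dots> = 2 * (g n / real n) + 1 / real n" by (simp add: add_divide_distrib)
    finally show False using N[OF n1(2)] by simp
  qed
  then have "T y = y" unfolding d_def by simp
  with yC show ?thesis by blast
qed

end
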